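(* For $m\ge1$ and $n\ge2$, \[ G_{m,n}=\frac{2(-1)^{n-1}}{n!}\int_0^1\binom{t}{m}\left[{n\atop 2}\right]_{t-1}dt . \]
   Context: The generalized Gregory coefficients $G_{m,n}$ are defined by $\sum_{m,n\ge0}G_{m,n}x^my^n=\dfrac{y\log^2(1+x)-x\log^2(1+y)}{\log(1+x)-\log(1+y)}$ (formal power series; $\log^ku=(\log u)^k$). $\binom{t}{m}=t(t-1)\cdots(t-m+1)/m!$. The Stirling polynomials of the first kind $\left[{n\atop m}\right]_x\in\mathbb Z[x]$ ($n\ge m\ge0$) are defined by $\sum_{m=0}^n\left[{n\atop m}\right]_x y^m=(x+y)(x+y+1)\cdots(x+y+n-1)$; equivalently $(1-t)^{-x}\frac{(-1)^m}{m!}\log^m(1-t)=\sum_{n\ge m}\left[{n\atop m}\right]_x\frac{t^n}{n!}$. *)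

theory Defs
  imports "HOL-Analysis.Analysis" "HOL-Computational_Algebra.Formal_Power_Series"
    "HOL-Computational_Algebra.Polynomial"
begin

text \<open>Bivariate formal power series over the reals are modelled as real fps fps:
  the outer variable is y, the inner (coefficient) variable is x.
  The coefficient of x^m y^n of F is fps_nth (fps_nth F n) m.\<close>

definition bvX :: "real fps fps" where "bvX = fps_const fps_X"
definition bvY :: "real fps fps" where "bvY = fps_X"

text \<open>log(1+x) and log(1+y) as bivariate series; fps_ln 1 = log(1+X).\<close>
definition logx :: "real fps fps" where "logx = fps_const (fps_ln 1)"
definition logy :: "real fps fps" where
  "logy = Abs_fps (\<lambda>n. fps_const (fps_nth (fps_ln (1::real)) n))"

definition gregory_gf :: "real fps fps" where
  "gregory_gf = (THE Q. Q * (logx - logy) = bvY * logx ^ 2 - bvX * logy ^ 2)"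

definition gen_gregory :: "nat \<Rightarrow> nat \<Rightarrow> real" where
  "gen_gregory m n = fps_nth (fps_nth gregory_gf n) m"

text \<open>Stirling polynomials of the first kind [n, m]_x, evaluated at real x:
  coefficient of y^m in (x+y)(x+y+1)...(x+y+n-1).\<close>
definition stirling1_poly :: "nat \<Rightarrow> nat \<Rightarrow> real \<Rightarrow> real" where
  "stirling1_poly n m x = coeff (\<Prod>i<n. [:x + of_nat i, 1:]) m"

end

theory Submission
  imports Defs
begin

unbundle no vec_syntax
unbundle fps_syntax



type_synonym K = "real poly"

definition cst :: "real fps \<Rightarrow> K fps" where "cst f = Abs_fps (\<lambda>n. [:f $ n:])"
definition D :: "K fps \<Rightarrow> K fps" where "D F = Abs_fps (\<lambda>n. pderiv (F $ n))"

lemma const_poly_sum: "(\<Sum>i\<in>A. [:f i:]) = [:(\<Sum>i\<in>A. f i)::real:]"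
  by (induction A rule: infinite_finite_induct) auto

lemma pderiv_sum': "pderiv (\<Sum>i\<in>A. f i) = (\<Sum>i\<in>A. pderiv (f i))"
  by (induction A rule: infinite_finite_induct) (auto simp: pderiv_add)

lemma cst_nth[simp]: "cst f  $  n = [:f $ n:]" by (simp add: cst_def)
lemma D_nth[simp]: "D F  $  n = pderiv (F $ n)" by (simp add: D_def)

lemma cst_add: "cst (f + g) = cst f + cst g" by (rule fps_ext) simp
lemma cst_mult: "cst (f * g) = cst f * cst g"
  by (rule fps_ext) (simp add: fps_mult_nth const_poly_sum mult.commute)
lemma cst_deriv: "cst (fps_deriv f) = fps_deriv (cst f)"
  by (rule fps_ext) (simp add: of_nat_poly)

lemma D_add: "D (F + G) = D F + D G" by (rule fps_ext) (simp add: pderiv_add)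
lemma D_diff: "D (F - G) = D F - D G" by (rule fps_ext) (simp add: pderiv_diff)
lemma D_uminus: "D (- F) = - D F" by (rule fps_ext) (simp add: pderiv_minus)
lemma D_mult: "D (F * G) = D F * G + F * D G"
proof (rule fps_ext)
  fix n
  have "D (F * G) $ n = (\<Sum>i=0..n. pderiv (F $ i * G $ (n - i)))"
    by (simp add: fps_mult_nth pderiv_sum')
  also have "\<dots> = (\<Sum>i=0..n. pderiv (F $ i) * G $ (n - i) + F $ i * pderiv (G $ (n - i)))"
    by (rule sum.cong) (simp_all add: pderiv_mult mult.commute)
  also have "\<dots> = (D F * G + F * D G) $ n"
    by (simp add: fps_mult_nth sum.distrib)
  finally show "D (F * G) $ n = (D F * G + F * D G) $ n" .
qed
lemma D_cst: "D (cst f) = 0" by (rule fps_ext) (simp add: pderiv_pCons)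
lemma D_const: "D (fps_const p) = fps_const (pderiv p)"
  by (rule fps_ext) (simp add: pderiv_pCons)
lemma pderiv_1n: "pderiv (1 + of_nat n :: K) = 0" by (metis of_nat_Suc pderiv_of_nat)
lemma D_deriv: "D (fps_deriv F) = fps_deriv (D F)"
  by (rule fps_ext) (simp add: pderiv_mult pderiv_1n)
lemma D_one: "D 1 = 0" by (rule fps_ext) (simp add: pderiv_pCons)
lemma D_X: "D fps_X = 0" by (rule fps_ext) (simp add: pderiv_pCons fps_X_nth)

definition Bp :: "K \<Rightarrow> nat \<Rightarrow> K" where
  "Bp T m = smult (1 / fact m) (\<Prod>k<m. T - of_nat k)"
definition Pw :: "K \<Rightarrow> K fps" where "Pw T = Abs_fps (Bp T)"
definition Lc :: "K fps" where "Lc = cst (fps_ln 1)"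

lemma Bp_0[simp]: "Bp T 0 = 1" by (simp add: Bp_def)

lemma Bp_Suc: "of_nat (Suc n) * Bp T (Suc n) = (T - of_nat n) * Bp T n"
proof -
  have "of_nat (Suc n) * Bp T (Suc n) = smult (of_nat (Suc n) / fact (Suc n)) ((T - of_nat n) * (\<Prod>k<n. T - of_nat k))"
    by (simp add: Bp_def of_nat_poly mult_ac)
  also have "of_nat (Suc n) / fact (Suc n) = (1 / fact n :: real)"
    by (simp add: fact_Suc field_simps del: of_nat_Suc)
  finally show ?thesis by (simp add: Bp_def)
qed

lemma onepX_mult_nth: "((1 + fps_X) * (G::K fps)) $ n = G $ n + (if n = 0 then 0 else G $ (n - 1))"
proof -
  have "(1 + fps_X) * G = G + fps_X * G" by (simp add: algebra_simps)
  then show ?thesis by simp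
qed

lemma Pw_ode: "(1 + fps_X) * fps_deriv (Pw T) = fps_const T * Pw T"
proof (rule fps_ext)
  fix n
  show "((1 + fps_X) * fps_deriv (Pw T)) $ n = (fps_const T * Pw T) $ n"
  proof (cases n)
    case 0 then show ?thesis using Bp_Suc[of 0 T] by (simp add: onepX_mult_nth Pw_def)
  next
    case (Suc k)
    have "of_nat (Suc (Suc k)) * Bp T (Suc (Suc k)) + of_nat (Suc k) * Bp T (Suc k) = T * Bp T (Suc k)"
      unfolding Bp_Suc[of "Suc k"] by (simp add: algebra_simps)
    then show ?thesis using Suc by (simp add: onepX_mult_nth Pw_def)
  qed
qed

lemma ode_zero:
  fixes E :: "K fps"
  assumes "(1 + fps_X) * fps_deriv E + fps_const A * E = 0" "E $ 0 = 0"
  shows "E = 0"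
proof -
  have "E $ n = 0" for n
  proof (induction n)
    case 0 then show ?case using assms(2) .
  next
    case (Suc n)
    have "((1 + fps_X) * fps_deriv E + fps_const A * E) $ n = 0" using assms(1) by simp
    then have "of_nat (Suc n) * E $ Suc n = 0" using Suc by (cases n) (simp_all add: onepX_mult_nth del: of_nat_Suc)
    then show ?case by (metis mult_eq_0_iff of_nat_eq_0_iff nat.distinct(1))
  qed
  then show ?thesis by (simp add: fps_ext)
qed

lemma cst_one: "cst 1 = 1" by (rule fps_ext) simp
lemma cst_X: "cst fps_X = fps_X" by (rule fps_ext) (simp add: fps_X_nth)

lemma Lc_ode: "(1 + fps_X) * fps_deriv Lc = 1"
proof -
  have "(1 + fps_X) * fps_deriv (fps_ln (1::real)) = 1"
    by (simp add: fps_ln_deriv inverse_mult_eq_1')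
  then have "cst ((1 + fps_X) * fps_deriv (fps_ln (1::real))) = 1" by (simp add: cst_one)
  then show ?thesis by (simp add: Lc_def cst_mult cst_add cst_one cst_X cst_deriv)
qed

lemma D_Lc: "D Lc = 0" by (simp add: Lc_def D_cst)


lemma D_Pw: "D (Pw T) = fps_const (pderiv T) * Lc * Pw T"
proof -
  define P where "P = Pw T"
  define c where "c = fps_const (pderiv T)"
  define E where "E = D P - c * Lc * P"
  define u :: "K fps" where "u = 1 + fps_X"
  have h1: "u * fps_deriv (D P) = D (u * fps_deriv P)"
    by (simp add: u_def D_mult D_add D_one D_X D_deriv)
  have h2: "D (fps_const T * P) = c * P + fps_const T * D P"
    by (simp add: D_mult D_const c_def)
  have dE: "fps_deriv E = fps_deriv (D P) - c * (fps_deriv Lc * P + Lc * fps_deriv P)"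
    by (simp add: E_def c_def algebra_simps)
  have alg: "\<And>v w z. u * (v - c * (w * P + Lc * z)) = u * v - c * ((u * w) * P + Lc * (u * z))"
    by (simp add: algebra_simps)
  have "u * fps_deriv E = u * fps_deriv (D P) - c * ((u * fps_deriv Lc) * P + Lc * (u * fps_deriv P))"
    unfolding dE alg ..
  also have "\<dots> = D (fps_const T * P) - c * (P + Lc * (fps_const T * P))"
    unfolding h1 Pw_ode[of T, folded P_def u_def] Lc_ode[folded u_def] by simp
  also have "\<dots> = fps_const T * E"
    unfolding h2 E_def by (simp add: algebra_simps)
  finally have "(1 + fps_X) * fps_deriv E + fps_const (- T) * E = 0"
    by (simp add: u_def fps_const_neg[symmetric] del: fps_const_neg)
  moreover have "E $ 0 = 0" by (simp add: E_def P_def Pw_def Lc_def c_def)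
  ultimately have "E = 0" by (rule ode_zero)
  then show ?thesis by (simp add: E_def P_def c_def)
qed

lemma poly_Bp: "poly (Bp T m) t = poly T t gchoose m"
  by (simp add: Bp_def gbinomial_prod_rev poly_prod atLeast0LessThan divide_inverse mult.commute)

definition ev :: "real \<Rightarrow> K fps \<Rightarrow> real fps" where "ev t F = Abs_fps (\<lambda>n. poly (F $ n) t)"
lemma ev_nth[simp]: "ev t F $ n = poly (F $ n) t" by (simp add: ev_def)
lemma ev_mult: "ev t (F * G) = ev t F * ev t G"
  by (rule fps_ext) (simp add: fps_mult_nth poly_sum)
lemma ev_cst: "ev t (cst f) = f" by (rule fps_ext) simp

definition CC :: "K fps" where "CC = Pw (1 - [:0,1:])"
definition RR :: "K fps" where "RR = CC * Lc ^ 2"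

lemma m1K: "[:- 1:] = (- 1 :: K)" by (simp add: one_pCons)
lemma D_CC: "D CC = - (Lc * CC)"
  by (simp add: CC_def D_Pw pderiv_diff pderiv_pCons m1K fps_const_neg[symmetric] del: fps_const_neg)

lemma D_RR: "D RR = - (RR * Lc)"
  by (simp add: RR_def D_mult D_CC D_Lc power2_eq_square algebra_simps)

lemma ev1_CC: "ev 1 CC = 1"
  by (rule fps_ext) (simp add: CC_def Pw_def poly_Bp gbinomial_0_left)

lemma ev0_CC: "ev 0 CC = 1 + fps_X"
proof (rule fps_ext)
  fix n
  have "(1::real) gchoose n = of_nat (1 choose n)"
    using binomial_gbinomial[of 1 n, where 'a=real] by simp
  then show "ev 0 CC $ n = (1 + fps_X) $ n"
    by (cases n) (auto simp: CC_def Pw_def poly_Bp fps_X_nth binomial_eq_0)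
qed



lemma stir_rec: "stirling1_poly (Suc n) k x = (x + of_nat n) * stirling1_poly n k x
   + (if k = 0 then 0 else stirling1_poly n (k - 1) x)"
proof -
  have h: "p * [:a, 1:] = smult a p + pCons 0 p" for p :: "real poly" and a
    by (simp add: mult_pCons_right)
  show ?thesis unfolding stirling1_poly_def prod.lessThan_Suc h
    by (cases k) (simp_all add: coeff_pCons)
qed

fun cs :: "nat \<Rightarrow> nat \<Rightarrow> K" where
  "cs 0 k = (if k = 0 then 1 else 0)"
| "cs (Suc n) k = [:of_nat n - 1, 1:] * cs n k + (if k = 0 then 0 else cs n (k - 1))"

lemma poly_cs: "poly (cs n k) t = stirling1_poly n k (t - 1)"
proof (induction n arbitrary: k)
  case 0 then show ?case by (simp add: stirling1_poly_def)
next
  case (Suc n) then show ?case by (simp add: stir_rec algebra_simps)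
qed


definition u0 :: K where "u0 = [:-1, 1:]"
definition S :: "nat \<Rightarrow> K fps" where
  "S k = Abs_fps (\<lambda>n. smult ((-1) ^ n / fact n) (cs n k))"

lemma derivX_nth: "((1 + fps_X) * fps_deriv F) $ n = of_nat (Suc n) * F $ (Suc n) + of_nat n * (F::K fps) $ n"
  by (cases n) (simp_all add: onepX_mult_nth)

lemma S_ode: "(1 + fps_X) * fps_deriv (S k) + fps_const u0 * S k + (if k = 0 then 0 else S (k - 1)) = 0"
proof (rule fps_ext)
  fix n
  define a :: real where "a = (-1) ^ n / fact n"
  have e1: "of_nat (Suc n) * smult ((-1) ^ Suc n / fact (Suc n)) p = smult (- a) p" for p :: K
  proof -
    have "of_nat (Suc n) * ((-1) ^ Suc n / fact (Suc n)) = (- a :: real)"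
      by (simp add: a_def fact_Suc field_simps del: of_nat_Suc)
    then show ?thesis by (simp add: of_nat_poly del: of_nat_Suc)
  qed
  have e2: "of_nat n * smult a p = smult a (of_nat n * p)" for p :: K
    by (simp add: of_nat_poly)
  have e3: "[:of_nat n - 1, 1:] = u0 + (of_nat n :: K)"
    by (simp add: u0_def of_nat_poly)
  have t1: "((1 + fps_X) * fps_deriv (S k)) $ n = smult (- a) (cs (Suc n) k) + smult a (of_nat n * cs n k)"
    by (simp only: derivX_nth S_def fps_nth_Abs_fps e1 a_def[symmetric] e2)
  have t2: "(fps_const u0 * S k) $ n = smult a (u0 * cs n k)"
    by (simp add: S_def a_def del: cs.simps)
  have t3: "(if k = 0 then 0 else S (k - 1)) $ n = smult a (if k = 0 then 0 else cs n (k - 1))"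
    by (simp add: S_def a_def del: cs.simps)
  have "((1 + fps_X) * fps_deriv (S k) + fps_const u0 * S k + (if k = 0 then 0 else S (k - 1))) $ n
     = smult a (- cs (Suc n) k + of_nat n * cs n k + u0 * cs n k + (if k = 0 then 0 else cs n (k - 1)))"
    unfolding fps_add_nth t1 t2 t3 by (simp add: smult_add_right smult_minus_right smult_diff_right del: cs.simps)
  also have "\<dots> = 0"
    unfolding cs.simps(2) e3 by (simp add: algebra_simps)
  finally show "((1 + fps_X) * fps_deriv (S k) + fps_const u0 * S k + (if k = 0 then 0 else S (k - 1))) $ n = 0 $ n"
    by simp
qed


lemma ring_aux: "(x::'a::comm_ring) * (p - q) + c * (r - w) = (x*p + c*r + z) - (x*q + c*w + z)"
  by (simp add: algebra_simps)

lemma ring_aux2: "(x::'a::comm_ring) * (- (c*d + a*b)) = - ((x*a)*b + c*(x*d))"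
  by (simp add: algebra_simps)
lemma ring_aux3: "- ((1::'a::comm_ring_1) * b + c * (- (u * b))) = - b + u * (c * b)"
  by (simp add: algebra_simps)

lemma ode_unique:
  fixes F G :: "K fps"
  assumes "(1 + fps_X) * fps_deriv F + fps_const A * F + H = 0"
      and "(1 + fps_X) * fps_deriv G + fps_const A * G + H = 0" and "F $ 0 = G $ 0"
  shows "F = G"
proof -
  have "(1 + fps_X) * fps_deriv (F - G) + fps_const A * (F - G) =
     ((1 + fps_X) * fps_deriv F + fps_const A * F + H) - ((1 + fps_X) * fps_deriv G + fps_const A * G + H)"
    unfolding fps_deriv_sub by (rule ring_aux)
  also have "\<dots> = 0" by (simp only: assms(1) assms(2) diff_self)
  finally have "F - G = 0" by (rule ode_zero) (simp add: assms(3))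
  then show ?thesis by simp
qed

lemma CC_ode: "(1 + fps_X) * fps_deriv CC = - (fps_const u0 * CC)"
proof -
  have "1 - [:0, 1:] = - u0" by (simp add: u0_def one_pCons)
  then show ?thesis using Pw_ode[of "1 - [:0,1:]"] by (simp add: CC_def fps_const_neg[symmetric] del: fps_const_neg)
qed

lemma S0: "S 0 = CC"
proof (rule ode_unique[where A = u0 and H = 0])
  show "(1 + fps_X) * fps_deriv (S 0) + fps_const u0 * S 0 + 0 = 0" using S_ode[of 0] by simp
  show "(1 + fps_X) * fps_deriv CC + fps_const u0 * CC + 0 = 0" by (simp add: CC_ode)
  show "S 0 $ 0 = CC $ 0" by (simp add: S_def CC_def Pw_def)
qed

lemma S1: "S 1 = - (Lc * CC)"
proof (rule ode_unique[where A = u0 and H = CC])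
  show "(1 + fps_X) * fps_deriv (S 1) + fps_const u0 * S 1 + CC = 0" using S_ode[of 1] by (simp add: S0)
  have "(1 + fps_X) * fps_deriv (- (Lc * CC)) = - (((1 + fps_X) * fps_deriv Lc) * CC + Lc * ((1 + fps_X) * fps_deriv CC))"
    unfolding fps_deriv_neg fps_deriv_mult by (rule ring_aux2)
  also have "\<dots> = - CC + fps_const u0 * (Lc * CC)" unfolding Lc_ode CC_ode by (rule ring_aux3)
  finally show "(1 + fps_X) * fps_deriv (- (Lc * CC)) + fps_const u0 * (- (Lc * CC)) + CC = 0" by simp
  show "S 1 $ 0 = (- (Lc * CC)) $ 0" by (simp add: S_def Lc_def)
qed


lemma ring_aux4: "(x::'a::comm_ring) * (k*a) + u*(k*b) + k*c = k*(x*a + u*b + c)"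
  by (simp add: algebra_simps)

lemma ring_aux5:
  fixes x d e u C L k :: "'a::comm_ring_1"
  assumes "x*d = 1" "x*e = -(u*C)" "k = 1+1"
  shows "x*(C*(L*d + d*L) + e*(L*L)) + u*(C*(L*L)) + k*(-(L*C)) = 0"
proof -
  have "x*(C*(L*d + d*L) + e*(L*L)) = C*(L*(x*d) + (x*d)*L) + (x*e)*(L*L)"
    by (simp add: algebra_simps)
  also have "\<dots> = C*(L*1 + 1*L) + (-(u*C))*(L*L)" unfolding assms(1,2) ..
  finally show ?thesis unfolding assms(3) by (simp add: algebra_simps)
qed

lemma S2: "RR = fps_const 2 * S 2"
proof (rule ode_unique[where A = u0 and H = "fps_const 2 * S 1"])
  show "(1 + fps_X) * fps_deriv (fps_const 2 * S 2) + fps_const u0 * (fps_const 2 * S 2) + fps_const 2 * S 1 = 0"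
    unfolding fps_deriv_mult_const_left ring_aux4 using S_ode[of 2] by simp
  have k: "fps_const (2::K) = 1 + 1" by (simp add: fps_const_add[symmetric])
  show "(1 + fps_X) * fps_deriv RR + fps_const u0 * RR + fps_const 2 * S 1 = 0"
    unfolding RR_def power2_eq_square S1 fps_deriv_mult
    by (rule ring_aux5[OF Lc_ode CC_ode k])
  show "RR $ 0 = (fps_const 2 * S 2) $ 0" by (simp add: S_def RR_def Lc_def power2_eq_square)
qed



definition II :: "K \<Rightarrow> real" where "II p = integral {0..1} (poly p)"

lemma poly_integrable: "(poly p) integrable_on {0..1::real}"
  by (intro integrable_continuous_interval continuous_on_poly continuous_on_id continuous_on_const)

lemma II_pderiv: "II (pderiv p) = poly p 1 - poly p 0"
proof -
  have "((poly (pderiv p)) has_integral (poly p 1 - poly p 0)) {0..1}"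
    by (rule fundamental_theorem_of_calculus)
       (auto intro!: has_field_derivative_imp_has_derivative simp: has_real_derivative_iff_has_vector_derivative[symmetric]
             intro: DERIV_subset[OF poly_DERIV])
  then show ?thesis by (simp add: II_def integral_unique)
qed

lemma II_add: "II (p + q) = II p + II q"
  unfolding II_def poly_add by (rule integral_add[OF poly_integrable poly_integrable])

lemma II_uminus: "II (- p) = - II p"
  unfolding II_def poly_minus by simp

lemma II_sum: "II (\<Sum>i\<in>A. f i) = (\<Sum>i\<in>A. II (f i))"
proof (induction A rule: infinite_finite_induct)
  case (infinite A)
  have "poly 0 = (\<lambda>x. 0::real)" by auto
  with infinite show ?case by (simp add: II_def)
next
  case empty
  have "poly 0 = (\<lambda>x. 0::real)" by auto
  then show ?case by (simp add: II_def)
next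
  case (insert x F) then show ?case by (simp add: II_add)
qed

lemma II_const: "II (p * [:c:]) = II p * c"
proof -
  have "poly (p * [:c:]) = (\<lambda>x. c * poly p x)" by (rule ext) (simp add: poly_mult mult.commute)
  then show ?thesis unfolding II_def by (simp add: mult.commute)
qed

lemma RR_poly: "poly (RR $ n) t = 2 * ((-1) ^ n / fact n) * stirling1_poly n 2 (t - 1)"
  by (simp add: S2 S_def poly_cs)

abbreviation XX :: K where "XX \<equiv> [:0, 1:]"
definition ll :: "nat \<Rightarrow> real" where "ll n = fps_ln 1 $ n"
definition M2 :: "real fps" where "M2 = fps_ln 1 ^ 2"

lemma pderiv_Bp: "pderiv (Bp XX m) = (\<Sum>i=0..m. Bp XX i * [:ll (m - i):])"
proof -
  have p1: "pderiv XX = 1" by (simp add: pderiv_pCons one_pCons)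
  have "D (Pw XX) = Lc * Pw XX" using D_Pw[of XX] unfolding p1 by simp
  then have "D (Pw XX) $ m = (Pw XX * Lc) $ m" by (simp add: mult.commute)
  then show ?thesis by (simp add: Pw_def fps_mult_nth Lc_def ll_def)
qed

lemma pderiv_RR: "pderiv (RR $ n) = - (\<Sum>j=0..n. RR $ j * [:ll (n - j):])"
proof -
  have "D RR $ n = - ((RR * Lc) $ n)" using D_RR by simp
  then show ?thesis by (simp add: fps_mult_nth Lc_def ll_def)
qed

lemma ev_RR1: "ev 1 RR = M2"
  by (simp add: RR_def ev_mult ev1_CC Lc_def ev_cst M2_def power2_eq_square)

lemma ev_RR0: "ev 0 RR = (1 + fps_X) * M2"
  by (simp add: RR_def ev_mult ev0_CC Lc_def ev_cst M2_def power2_eq_square)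

lemma cmap2_mult: "Abs_fps (\<lambda>n. fps_const (f $ n)) * Abs_fps (\<lambda>n. fps_const (g $ n))
    = (Abs_fps (\<lambda>n. fps_const ((f * g) $ n)) :: real fps fps)"
proof (rule fps_ext)
  fix n
  show "(Abs_fps (\<lambda>n. fps_const (f $ n)) * Abs_fps (\<lambda>n. fps_const (g $ n))) $ n
        = Abs_fps (\<lambda>n. fps_const ((f * g) $ n)) $ n"
    by (rule fps_ext) (simp add: fps_mult_nth fps_sum_nth)
qed

lemma logy_sq: "logy ^ 2 = Abs_fps (\<lambda>n. fps_const (M2 $ n))"
  by (simp add: power2_eq_square logy_def cmap2_mult M2_def)

definition Phi :: "real fps fps" where
  "Phi = Abs_fps (\<lambda>n. Abs_fps (\<lambda>m. II (Bp XX m * RR $ n)))"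

lemma Phi_nth: "Phi $ n $ m = II (Bp XX m * RR $ n)" by (simp add: Phi_def)

lemma Phi_logx: "(Phi * logx) $ n $ m = II (pderiv (Bp XX m) * RR $ n)"
proof -
  have "(Phi * logx) $ n = Phi $ n * fps_ln 1" by (simp add: logx_def)
  then have "(Phi * logx) $ n $ m = (\<Sum>i=0..m. II (Bp XX i * RR $ n) * ll (m - i))"
    by (simp add: fps_mult_nth Phi_nth ll_def)
  also have "\<dots> = II (\<Sum>i=0..m. Bp XX i * RR $ n * [:ll (m - i):])"
    by (simp only: II_sum II_const)
  also have "\<dots> = II (pderiv (Bp XX m) * RR $ n)"
    by (simp only: pderiv_Bp sum_distrib_right sum_distrib_left mult_ac)
  finally show ?thesis .
qed

lemma Phi_logy: "(Phi * logy) $ n $ m = - II (Bp XX m * pderiv (RR $ n))"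
proof -
  have "(Phi * logy) $ n = (\<Sum>j=0..n. Phi $ j * fps_const (ll (n - j)))"
    by (simp add: fps_mult_nth logy_def ll_def)
  then have "(Phi * logy) $ n $ m = (\<Sum>j=0..n. II (Bp XX m * RR $ j) * ll (n - j))"
    by (simp add: fps_sum_nth Phi_nth)
  also have "\<dots> = II (\<Sum>j=0..n. Bp XX m * RR $ j * [:ll (n - j):])"
    by (simp only: II_sum II_const)
  also have "\<dots> = - II (Bp XX m * pderiv (RR $ n))"
    by (simp add: pderiv_RR sum_distrib_left mult_ac II_uminus)
  finally show ?thesis .
qed

lemma Phi_main: "Phi * (logx - logy) = logy ^ 2 * (bvX - bvY)"
proof (rule fps_ext, rule fps_ext)
  fix n m
  have "(Phi * (logx - logy)) $ n $ m = II (pderiv (Bp XX m) * RR $ n) + II (Bp XX m * pderiv (RR $ n))"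
    by (simp add: right_diff_distrib Phi_logx Phi_logy)
  also have "\<dots> = II (pderiv (Bp XX m * RR $ n))"
    by (simp add: pderiv_mult II_add mult_ac)
  also have "\<dots> = (1 gchoose m) * M2 $ n - (0 gchoose m) * ((1 + fps_X) * M2) $ n"
  proof -
    have "poly (RR $ n) 1 = M2 $ n" using ev_nth[of 1 RR n] by (simp add: ev_RR1)
    moreover have "poly (RR $ n) 0 = ((1 + fps_X) * M2) $ n" using ev_nth[of 0 RR n] by (simp add: ev_RR0)
    ultimately show ?thesis unfolding II_pderiv poly_mult poly_Bp by simp
  qed
  also have "\<dots> = (logy ^ 2 * (bvX - bvY)) $ n $ m"
  proof -
    have a: "((1 + fps_X) * M2) $ n = M2 $ n + (if n = 0 then 0 else M2 $ (n - 1))"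
    proof -
      have "(1 + fps_X) * M2 = M2 + fps_X * M2" by (simp add: algebra_simps)
      then show ?thesis by simp
    qed
    have b: "(logy ^ 2 * bvX) $ n $ m = (if m = 1 then M2 $ n else 0)"
      by (simp add: logy_sq bvX_def fps_X_nth)
    have c: "(logy ^ 2 * bvY) $ n $ m = (if m = 0 \<and> n \<noteq> 0 then M2 $ (n - 1) else 0)"
    proof -
      have e: "logy ^ 2 * bvY = fps_X * logy ^ 2" by (simp add: bvY_def mult.commute)
      have f: "(logy ^ 2 * bvY) $ n = (if n = 0 then 0 else (logy ^ 2) $ (n - 1))"
        unfolding e by (rule fps_X_mult_nth)
      show ?thesis unfolding f by (simp add: logy_sq)
    qed
    have g1: "(1::real) gchoose m = (if m \<le> 1 then 1 else 0)"
      using binomial_gbinomial[of 1 m, where 'a=real] by (cases m) (auto simp: binomial_eq_0)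
    show ?thesis unfolding right_diff_distrib fps_sub_nth b c a g1
      by (auto simp: gbinomial_0_left)
  qed
  finally show "(Phi * (logx - logy)) $ n $ m = (logy ^ 2 * (bvX - bvY)) $ n $ m" .
qed

lemma ring_aux6:
  fixes P a b x y :: "'a::comm_ring_1"
  assumes "P * (a - b) = b ^ 2 * (x - y)"
  shows "(- P + y * (a + b)) * (a - b) = y * a ^ 2 - x * b ^ 2"
proof -
  have "(- P + y * (a + b)) * (a - b) = - (P * (a - b)) + y * (a + b) * (a - b)"
    by (simp add: algebra_simps)
  also have "\<dots> = y * a ^ 2 - x * b ^ 2" unfolding assms by (simp add: algebra_simps power2_eq_square)
  finally show ?thesis .
qed

lemma logs_nz: "logx - logy \<noteq> 0"
proof
  assume "logx - logy = 0"
  then have "(logx - logy) $ 0 $ 1 = 0" by simp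
  then show False by (simp add: logx_def logy_def fps_ln_nth)
qed

lemma gf_eq: "gregory_gf = - Phi + bvY * (logx + logy)"
  unfolding gregory_gf_def
proof (rule the_equality)
  show "(- Phi + bvY * (logx + logy)) * (logx - logy) = bvY * logx ^ 2 - bvX * logy ^ 2"
    by (rule ring_aux6[OF Phi_main])
next
  fix Q assume "Q * (logx - logy) = bvY * logx ^ 2 - bvX * logy ^ 2"
  then have "Q * (logx - logy) = (- Phi + bvY * (logx + logy)) * (logx - logy)"
    using ring_aux6[OF Phi_main] by simp
  then show "Q = - Phi + bvY * (logx + logy)" using logs_nz by simp
qed

theorem theorem5p3:
  fixes m n :: nat
  assumes "m \<ge> 1" and "n \<ge> 2"
  shows "gen_gregory m n =
    2 * (-1) ^ (n - 1) / fact n *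
      integral {0..1} (\<lambda>t::real. (t gchoose m) * stirling1_poly n 2 (t - 1))"
proof -
  have y: "(bvY * (logx + logy)) $ n $ m = 0"
  proof -
    have "(bvY * (logx + logy)) $ n = (logx + logy) $ (n - 1)"
      using assms by (simp add: bvY_def)
    then show ?thesis using assms by (simp add: logx_def logy_def)
  qed
  have "gen_gregory m n = - II (Bp XX m * RR $ n)"
    unfolding gen_gregory_def gf_eq using y by (simp add: Phi_nth)
  also have "II (Bp XX m * RR $ n) = integral {0..1} (\<lambda>t. (2 * ((-1) ^ n / fact n)) * ((t gchoose m) * stirling1_poly n 2 (t - 1)))"
    unfolding II_def by (rule arg_cong[where f = "integral {0..1}"]) (auto simp: poly_mult poly_Bp RR_poly)
  also have "\<dots> = (2 * ((-1) ^ n / fact n)) * integral {0..1} (\<lambda>t. (t gchoose m) * stirling1_poly n 2 (t - 1))"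
    by simp
  finally show ?thesis
  proof -
    have "(-1::real) ^ n = - ((-1) ^ (n - 1))"
      using assms by (cases n) auto
    then show "gen_gregory m n = - (2 * ((-1) ^ n / fact n) * integral {0..1} (\<lambda>t. (t gchoose m) * stirling1_poly n 2 (t - 1))) \<Longrightarrow> ?thesis"
      by simp
  qed
qed


end
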